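(* Let $L'$ be a lattice (join $+$, meet $\cdot$, order $\le'$) and let $(L_x)_{x\in S}$ be a family of sublattices of $L'$, each of finite length and carrying the order induced by $L'$, which forms an $S$-glued system. Assume that either $S$ is modular, or $0_x+0_y=0_{x\vee y}$ and $1_x\cdot 1_y=1_{x\wedge y}$ in $L'$ for all $x,y\in S$. Then $\bigcup_{x\in S}L_x$ is a sublattice of $L'$, and the order of the $S$-glued sum of $(L_x)_{x\in S}$ coincides with the restriction of $\le'$ to $\bigcup_{x\in S}L_x$.
   Context: Let $S$ be a lattice of finite length (every chain in $S$ is finite), with order $\le$, join $\vee$ and meet $\wedge$; $x\prec y$ means that $y$ covers $x$. An \emph{$S$-glued system} is a family $(L_x,\le_x)_{x\in S}$ of lattices of finite length (with least element $0_x$, greatest element $1_x$), whose underlying sets may overlap, such that for all $x,y\in S$: (1) if $x\le y$ and $L_x\cap L_y\ne\emptyset$, then $L_x\cap L_y$ is a filter of $L_x$ and an ideal of $L_y$; (2) in the situation of (1), for all $a,b\in L_x\cap L_y$: $a\le_x b$ iff $a\le_y b$; (3) if $x\prec y$ then $L_x\cap L_y\ne\emptyset$; (4) $L_x\cap L_y\subseteq L_{x\wedge y}\cap L_{x\vee y}$. The \emph{$S$-glued sum} of the system is the set $L=\bigcup_{x\in S}L_x$ equipped with the relation defined as the transitive closure of $\bigcup_{x\in S}\le_x$. *)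

theory Defs
  imports Main
begin

definition finite_length_on :: "'a::order set \<Rightarrow> bool" where
  "finite_length_on A \<longleftrightarrow>
     (\<forall>C. C \<subseteq> A \<and> (\<forall>a\<in>C. \<forall>b\<in>C. a \<le> b \<or> b \<le> a) \<longrightarrow> finite C)"

definition sublattice :: "'a::lattice set \<Rightarrow> bool" where
  "sublattice A \<longleftrightarrow> A \<noteq> {} \<and> (\<forall>a\<in>A. \<forall>b\<in>A. sup a b \<in> A \<and> inf a b \<in> A)"

definition bot_of :: "'a::order set \<Rightarrow> 'a" where
  "bot_of A = (THE z. z \<in> A \<and> (\<forall>y\<in>A. z \<le> y))"

definition top_of :: "'a::order set \<Rightarrow> 'a" where
  "top_of A = (THE z. z \<in> A \<and> (\<forall>y\<in>A. y \<le> z))"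

definition is_filter_in :: "'a::lattice set \<Rightarrow> 'a set \<Rightarrow> bool" where
  "is_filter_in F A \<longleftrightarrow> F \<noteq> {} \<and> F \<subseteq> A \<and>
     (\<forall>a\<in>F. \<forall>b\<in>A. a \<le> b \<longrightarrow> b \<in> F) \<and> (\<forall>a\<in>F. \<forall>b\<in>F. inf a b \<in> F)"

definition is_ideal_in :: "'a::lattice set \<Rightarrow> 'a set \<Rightarrow> bool" where
  "is_ideal_in I A \<longleftrightarrow> I \<noteq> {} \<and> I \<subseteq> A \<and>
     (\<forall>a\<in>I. \<forall>b\<in>A. b \<le> a \<longrightarrow> b \<in> I) \<and> (\<forall>a\<in>I. \<forall>b\<in>I. sup a b \<in> I)"

definition covers :: "'s::order \<Rightarrow> 's \<Rightarrow> bool" where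
  "covers x y \<longleftrightarrow> x < y \<and> \<not> (\<exists>z. x < z \<and> z < y)"

definition modular_lattice :: "'s::lattice itself \<Rightarrow> bool" where
  "modular_lattice _ \<longleftrightarrow> (\<forall>a b c::'s. a \<le> c \<longrightarrow> sup a (inf b c) = inf (sup a b) c)"

text \<open>S-glued system of sublattices (L x) of an ambient lattice, each with the induced order
  (so condition (2) holds automatically).\<close>
definition glued_system :: "('s::lattice \<Rightarrow> 'a::lattice set) \<Rightarrow> bool" where
  "glued_system L \<longleftrightarrow>
     (\<forall>x y. x \<le> y \<and> L x \<inter> L y \<noteq> {} \<longrightarrow>
        is_filter_in (L x \<inter> L y) (L x) \<and> is_ideal_in (L x \<inter> L y) (L y)) \<and>
     (\<forall>x y. covers x y \<longrightarrow> L x \<inter> L y \<noteq> {}) \<and>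
     (\<forall>x y. L x \<inter> L y \<subseteq> L (inf x y) \<inter> L (sup x y))"

definition glued_order :: "('s \<Rightarrow> 'a::order set) \<Rightarrow> ('a \<times> 'a) set" where
  "glued_order L = {(a, b). \<exists>x. a \<in> L x \<and> b \<in> L x \<and> a \<le> b}\<^sup>+"

end

theory Submission imports Defs begin

lemma fl_wf_less:
  assumes "finite_length_on (A::'a::order set)"
  shows "wf {(a,b). a \<in> A \<and> b \<in> A \<and> a < b}"
proof (rule ccontr)
  assume "\<not> ?thesis"
  then obtain f where f: "\<And>i. (f (Suc i), f i) \<in> {(a,b). a \<in> A \<and> b \<in> A \<and> a < b}"
    unfolding wf_iff_no_infinite_down_chain by blast
  have mono: "f j < f i" if "i < j" for i j
    using that
  proof (induction j)
    case 0 then show ?case by simp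
  next
    case (Suc j)
    have "f (Suc j) < f j" using f[of j] by auto
    then show ?case using Suc by (metis less_Suc_eq order.strict_trans)
  qed
  have inj: "inj f"
  proof (rule injI)
    fix i j assume "f i = f j"
    then show "i = j" using mono[of i j] mono[of j i] by (cases i j rule: linorder_cases) auto
  qed
  have "range f \<subseteq> A" using f by blast
  moreover have "\<forall>a\<in>range f. \<forall>b\<in>range f. a \<le> b \<or> b \<le> a"
  proof (intro ballI)
    fix a b assume "a \<in> range f" "b \<in> range f"
    then obtain i j where "a = f i" "b = f j" by blast
    then show "a \<le> b \<or> b \<le> a" using mono[of i j] mono[of j i]
      by (cases i j rule: linorder_cases) auto
  qed
  ultimately have "finite (range f)" using assms unfolding finite_length_on_def by blast
  then show False using finite_imageD[OF _ inj] by simp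
qed

lemma fl_wf_greater:
  assumes "finite_length_on (A::'a::order set)"
  shows "wf {(a,b). a \<in> A \<and> b \<in> A \<and> b < a}"
proof (rule ccontr)
  assume "\<not> ?thesis"
  then obtain f where f: "\<And>i. (f (Suc i), f i) \<in> {(a,b). a \<in> A \<and> b \<in> A \<and> b < a}"
    unfolding wf_iff_no_infinite_down_chain by blast
  have mono: "f i < f j" if "i < j" for i j
    using that
  proof (induction j)
    case 0 then show ?case by simp
  next
    case (Suc j)
    have "f j < f (Suc j)" using f[of j] by auto
    then show ?case using Suc by (metis less_Suc_eq order.strict_trans)
  qed
  have inj: "inj f"
  proof (rule injI)
    fix i j assume "f i = f j"
    then show "i = j" using mono[of i j] mono[of j i] by (cases i j rule: linorder_cases) auto
  qed
  have "range f \<subseteq> A" using f by blast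
  moreover have "\<forall>a\<in>range f. \<forall>b\<in>range f. a \<le> b \<or> b \<le> a"
  proof (intro ballI)
    fix a b assume "a \<in> range f" "b \<in> range f"
    then obtain i j where "a = f i" "b = f j" by blast
    then show "a \<le> b \<or> b \<le> a" using mono[of i j] mono[of j i]
      by (cases i j rule: linorder_cases) auto
  qed
  ultimately have "finite (range f)" using assms unfolding finite_length_on_def by blast
  then show False using finite_imageD[OF _ inj] by simp
qed

lemma bot_of_prop:
  assumes "sublattice (A::'a::lattice set)" "finite_length_on A"
  shows "bot_of A \<in> A \<and> (\<forall>y\<in>A. bot_of A \<le> y)"
proof -
  obtain x where "x \<in> A" using assms(1) unfolding sublattice_def by blast
  from wfE_min[OF fl_wf_less[OF assms(2)] this] obtain m where
    m: "m \<in> A" "\<And>y. (y, m) \<in> {(a,b). a \<in> A \<and> b \<in> A \<and> a < b} \<Longrightarrow> y \<notin> A" by blast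
  have least: "\<forall>y\<in>A. m \<le> y"
  proof
    fix y assume y: "y \<in> A"
    have my: "inf m y \<in> A" using assms(1) m(1) y unfolding sublattice_def by simp
    have "\<not> inf m y < m"
    proof
      assume "inf m y < m"
      then have "(inf m y, m) \<in> {(a,b). a \<in> A \<and> b \<in> A \<and> a < b}" using my m(1) by simp
      then show False using m(2) my by blast
    qed
    then have "inf m y = m" using inf.cobounded1[of m y] by (simp add: order.strict_iff_order)
    then show "m \<le> y" by (simp add: le_iff_inf)
  qed
  have bm: "bot_of A = m" unfolding bot_of_def
  proof (rule the_equality)
    show "m \<in> A \<and> (\<forall>y\<in>A. m \<le> y)" using m(1) least by blast
    fix z assume "z \<in> A \<and> (\<forall>y\<in>A. z \<le> y)"
    then show "z = m" using m(1) least by (meson order.antisym)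
  qed
  show ?thesis unfolding bm using m(1) least by blast
qed

lemma top_of_prop:
  assumes "sublattice (A::'a::lattice set)" "finite_length_on A"
  shows "top_of A \<in> A \<and> (\<forall>y\<in>A. y \<le> top_of A)"
proof -
  obtain x where "x \<in> A" using assms(1) unfolding sublattice_def by blast
  from wfE_min[OF fl_wf_greater[OF assms(2)] this] obtain m where
    m: "m \<in> A" "\<And>y. (y, m) \<in> {(a,b). a \<in> A \<and> b \<in> A \<and> b < a} \<Longrightarrow> y \<notin> A" by blast
  have least: "\<forall>y\<in>A. y \<le> m"
  proof
    fix y assume y: "y \<in> A"
    have my: "sup m y \<in> A" using assms(1) m(1) y unfolding sublattice_def by simp
    have "\<not> m < sup m y"
    proof
      assume "m < sup m y"
      then have "(sup m y, m) \<in> {(a,b). a \<in> A \<and> b \<in> A \<and> b < a}" using my m(1) by simp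
      then show False using m(2) my by blast
    qed
    then have "sup m y = m" using sup.cobounded1[of m y] by (simp add: order.strict_iff_order)
    then show "y \<le> m" by (simp add: le_iff_sup sup_commute)
  qed
  have bm: "top_of A = m" unfolding top_of_def
  proof (rule the_equality)
    show "m \<in> A \<and> (\<forall>y\<in>A. y \<le> m)" using m(1) least by blast
    fix z assume "z \<in> A \<and> (\<forall>y\<in>A. y \<le> z)"
    then show "z = m" using m(1) least by (meson order.antisym)
  qed
  show ?thesis unfolding bm using m(1) least by blast
qed


locale gs =
  fixes L :: "'s::lattice \<Rightarrow> 'a::lattice set"
  assumes S_fin: "finite_length_on (UNIV :: 's set)"
    and L_sub: "\<And>x. sublattice (L x)"
    and L_fin: "\<And>x. finite_length_on (L x)"
    and glued: "glued_system L"
begin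

abbreviation "b0 x \<equiv> bot_of (L x)"
abbreviation "t1 x \<equiv> top_of (L x)"
definition "R = {(a, b). \<exists>x. a \<in> L x \<and> b \<in> L x \<and> a \<le> b}"

lemma b0: "b0 x \<in> L x" "a \<in> L x \<Longrightarrow> b0 x \<le> a"
  using bot_of_prop[OF L_sub L_fin] by blast+
lemma t1: "t1 x \<in> L x" "a \<in> L x \<Longrightarrow> a \<le> t1 x"
  using top_of_prop[OF L_sub L_fin] by blast+

lemma sub: "a \<in> L x \<Longrightarrow> b \<in> L x \<Longrightarrow> sup a b \<in> L x \<and> inf a b \<in> L x"
  using L_sub unfolding sublattice_def by blast

lemma wfS1: "wf {(a::'s, b). b < a}"
  using fl_wf_greater[OF S_fin] by simp
lemma wfS2: "wf {(a::'s, b). a < b}"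
  using fl_wf_less[OF S_fin] by simp

lemma cover_above:
  fixes x z :: 's
  assumes "x < z" obtains t where "covers x t" "t \<le> z"
proof -
  have "z \<in> {t. x < t \<and> t \<le> z}" using assms by simp
  from wfE_min[OF wfS2 this] obtain m where
    m: "m \<in> {t. x < t \<and> t \<le> z}" "\<And>y. (y, m) \<in> {(a, b). a < b} \<Longrightarrow> y \<notin> {t. x < t \<and> t \<le> z}"
    by blast
  have "covers x m" unfolding covers_def
  proof (intro conjI notI)
    show "x < m" using m(1) by simp
    assume "\<exists>za. x < za \<and> za < m"
    then obtain za where za: "x < za" "za < m" by blast
    have mz: "m \<le> z" using m(1) by simp
    have "za \<le> z" using less_imp_le[OF za(2)] mz by (rule order.trans)
    then show False using m(2)[of za] za by simp
  qed
  then show ?thesis using m that by blast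
qed

lemma cover_below:
  fixes x z :: 's
  assumes "x < z" obtains t where "x \<le> t" "covers t z"
proof -
  have "x \<in> {t. x \<le> t \<and> t < z}" using assms by simp
  from wfE_min[OF wfS1 this] obtain m where
    m: "m \<in> {t. x \<le> t \<and> t < z}" "\<And>y. (y, m) \<in> {(a, b). b < a} \<Longrightarrow> y \<notin> {t. x \<le> t \<and> t < z}"
    by blast
  have "covers m z" unfolding covers_def
  proof (intro conjI notI)
    show "m < z" using m(1) by simp
    assume "\<exists>za. m < za \<and> za < z"
    then obtain za where za: "m < za" "za < z" by blast
    have xm: "x \<le> m" using m(1) by simp
    have "x \<le> za" using xm less_imp_le[OF za(1)] by (rule order.trans)
    then show False using m(2)[of za] za by simp
  qed
  then show ?thesis using m that by blast
qed

lemma cover_facts: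
  assumes "covers x t"
  shows "is_filter_in (L x \<inter> L t) (L x)" "is_ideal_in (L x \<inter> L t) (L t)" "L x \<inter> L t \<noteq> {}"
  using glued assms unfolding glued_system_def covers_def by auto

lemma cover_b0: assumes "covers x t" shows "b0 t \<in> L x"
proof -
  obtain e where e: "e \<in> L x \<inter> L t" using cover_facts(3)[OF assms] by blast
  have "b0 t \<le> e" using b0 e by blast
  then show ?thesis using cover_facts(2)[OF assms] e b0(1)[of t] unfolding is_ideal_in_def by blast
qed

lemma cover_t1: assumes "covers t x" shows "t1 t \<in> L x"
proof -
  obtain e where e: "e \<in> L t \<inter> L x" using cover_facts(3)[OF assms] by blast
  have "e \<le> t1 t" using t1 e by blast
  then show ?thesis using cover_facts(1)[OF assms] e t1(1)[of t] unfolding is_filter_in_def by blast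
qed

lemma cover_up: assumes "covers x t" "a \<in> L x" shows "sup a (b0 t) \<in> L t" "sup a (b0 t) \<in> L x"
proof -
  show 1: "sup a (b0 t) \<in> L x" using sub assms cover_b0 by blast
  have "b0 t \<in> L x \<inter> L t" using cover_b0[OF assms(1)] b0 by blast
  then show "sup a (b0 t) \<in> L t" using cover_facts(1)[OF assms(1)] 1
    unfolding is_filter_in_def by (meson IntD2 sup.cobounded2)
qed

lemma cover_down: assumes "covers t x" "a \<in> L x" shows "inf a (t1 t) \<in> L t" "inf a (t1 t) \<in> L x"
proof -
  show 1: "inf a (t1 t) \<in> L x" using sub assms cover_t1 by blast
  have "t1 t \<in> L t \<inter> L x" using cover_t1[OF assms(1)] t1 by blast
  then show "inf a (t1 t) \<in> L t" using cover_facts(2)[OF assms(1)] 1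
    unfolding is_ideal_in_def by (meson IntD1 inf.cobounded2)
qed

lemma proj_up:
  "x \<le> z \<Longrightarrow> a \<in> L x \<Longrightarrow> sup a (b0 z) \<in> L z \<and> b0 x \<le> b0 z \<and> (a, sup a (b0 z)) \<in> R\<^sup>*"
proof (induction x arbitrary: a rule: wf_induct[OF wfS1])
  case (1 x)
  show ?case
  proof (cases "x = z")
    case True
    then show ?thesis using 1 b0 by (simp add: sup.absorb1)
  next
    case False
    then have "x < z" using 1 by simp
    then obtain t where t: "covers x t" "t \<le> z" by (rule cover_above)
    let ?a = "sup a (b0 t)"
    have a1: "?a \<in> L t" "?a \<in> L x" using cover_up[OF t(1) 1(3)] by auto
    have "x < t" using t(1) unfolding covers_def by simp
    then have IH: "sup ?a (b0 z) \<in> L z \<and> b0 t \<le> b0 z \<and> (?a, sup ?a (b0 z)) \<in> R\<^sup>*"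
      using 1(1) t(2) a1(1) by blast
    have eq: "sup ?a (b0 z) = sup a (b0 z)" using IH by (simp add: sup.absorb2 sup_assoc)
    have "b0 x \<le> b0 t" using b0 cover_b0[OF t(1)] by blast
    moreover have "(a, ?a) \<in> R" unfolding R_def using 1(3) a1(2) by auto
    ultimately show ?thesis using IH eq by (metis (no_types, lifting) converse_rtrancl_into_rtrancl order_trans)
  qed
qed

lemma proj_down:
  "w \<le> x \<Longrightarrow> a \<in> L x \<Longrightarrow> inf a (t1 w) \<in> L w \<and> t1 w \<le> t1 x"
proof (induction x arbitrary: a rule: wf_induct[OF wfS2])
  case (1 x)
  show ?case
  proof (cases "w = x")
    case True
    then show ?thesis using 1 t1 by (simp add: inf.absorb1)
  next
    case False
    then have "w < x" using 1 by simp
    then obtain t where t: "w \<le> t" "covers t x" by (rule cover_below)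
    let ?a = "inf a (t1 t)"
    have a1: "?a \<in> L t" "?a \<in> L x" using cover_down[OF t(2) 1(3)] by auto
    have "t < x" using t(2) unfolding covers_def by simp
    then have IH: "inf ?a (t1 w) \<in> L w \<and> t1 w \<le> t1 t"
      using 1(1) t(1) a1(1) by blast
    have eq: "inf ?a (t1 w) = inf a (t1 w)" using IH by (simp add: inf.absorb2 inf_assoc)
    have "t1 t \<le> t1 x" using t1 cover_t1[OF t(2)] by blast
    then show ?thesis using IH eq by auto
  qed
qed

lemma b0_mono: "x \<le> y \<Longrightarrow> b0 x \<le> b0 y"
  using proj_up b0(1) by blast
lemma t1_mono: "x \<le> y \<Longrightarrow> t1 x \<le> t1 y"
  using proj_down t1(1) by blast


lemma glue4: "c \<in> L x \<Longrightarrow> c \<in> L y \<Longrightarrow> c \<in> L (inf x y) \<and> c \<in> L (sup x y)"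
  using glued unfolding glued_system_def by blast

lemma cell0:
  assumes "covers w x" "covers w y"
  shows "b0 (sup x y) \<le> sup (b0 x) (b0 y)"
proof -
  let ?c = "sup (b0 x) (b0 y)"
  have c: "?c \<in> L w" using sub cover_b0 assms by blast
  have "b0 x \<in> L w \<inter> L x" using cover_b0[OF assms(1)] b0 by blast
  then have cx: "?c \<in> L x" using cover_facts(1)[OF assms(1)] c unfolding is_filter_in_def
    by (meson IntD2 sup.cobounded1)
  have "b0 y \<in> L w \<inter> L y" using cover_b0[OF assms(2)] b0 by blast
  then have cy: "?c \<in> L y" using cover_facts(1)[OF assms(2)] c unfolding is_filter_in_def
    by (meson IntD2 sup.cobounded2)
  show ?thesis using glue4[OF cx cy] b0 by blast
qed

lemma cell1:
  assumes "covers x v" "covers y v"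
  shows "inf (t1 x) (t1 y) \<le> t1 (inf x y)"
proof -
  let ?c = "inf (t1 x) (t1 y)"
  have c: "?c \<in> L v" using sub cover_t1 assms by blast
  have "t1 x \<in> L x \<inter> L v" using cover_t1[OF assms(1)] t1 by blast
  then have cx: "?c \<in> L x" using cover_facts(2)[OF assms(1)] c unfolding is_ideal_in_def
    by (meson IntD1 inf.cobounded1)
  have "t1 y \<in> L y \<inter> L v" using cover_t1[OF assms(2)] t1 by blast
  then have cy: "?c \<in> L y" using cover_facts(2)[OF assms(2)] c unfolding is_ideal_in_def
    by (meson IntD1 inf.cobounded2)
  show ?thesis using glue4[OF cx cy] t1 by blast
qed

lemma Z0_mod:
  assumes modu: "modular_lattice TYPE('s)"
  shows "b0 (sup x y) \<le> sup (b0 x) (b0 y)"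
proof -
  have md: "\<And>a b c::'s. a \<le> c \<Longrightarrow> sup a (inf b c) = inf (sup a b) c"
    using modu unfolding modular_lattice_def by blast
  have "\<forall>x y. inf x y = w \<longrightarrow> b0 (sup x y) \<le> sup (b0 x) (b0 y)" for w
  proof (induction w rule: wf_induct[OF wfS1])
    case (1 w)
    show ?case
    proof (intro allI impI)
      fix x y :: 's assume xy: "inf x y = w"
      show "b0 (sup x y) \<le> sup (b0 x) (b0 y)"
      proof (cases "x \<le> y \<or> y \<le> x")
        case True
        then show ?thesis
        proof
          assume "x \<le> y" then show ?thesis by (simp add: sup.absorb2 le_supI2)
        next
          assume "y \<le> x" then show ?thesis by (simp add: sup.absorb1 le_supI1)
        qed
      next
        case False
        have "w \<le> x" "w \<le> y" using xy by auto
        moreover have "w \<noteq> x" "w \<noteq> y" using xy False by (auto simp: le_iff_inf inf_commute)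
        ultimately have "w < x" "w < y" by auto
        obtain x1 where x1: "covers w x1" "x1 \<le> x" using \<open>w < x\<close> by (rule cover_above)
        obtain y1 where y1: "covers w y1" "y1 \<le> y" using \<open>w < y\<close> by (rule cover_above)
        have wx1: "w < x1" and wy1: "w < y1" using x1 y1 unfolding covers_def by auto
        have cell: "b0 (sup x1 y1) \<le> sup (b0 x1) (b0 y1)" by (rule cell0[OF x1(1) y1(1)])
        let ?u = "sup x1 y1"
        have iy1x: "inf y1 x = w"
        proof (rule order.antisym)
          have "inf y1 x \<le> inf y x" using y1(2) by (rule inf_mono) simp
          then show "inf y1 x \<le> w" using xy by (simp add: inf_commute)
          have "w \<le> x" using xy by auto
          then show "w \<le> inf y1 x" using less_imp_le[OF wy1] by simp
        qed
        have xu: "inf x ?u = x1"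
        proof -
          have "inf x ?u = inf (sup x1 y1) x" by (simp add: inf_commute)
          also have "\<dots> = sup x1 (inf y1 x)" using md[OF x1(2), of y1] by simp
          also have "\<dots> = x1" using iy1x less_imp_le[OF wx1] by (simp add: sup.absorb1)
          finally show ?thesis .
        qed
        have IH1: "b0 (sup x ?u) \<le> sup (b0 x) (b0 ?u)"
          using 1 xu wx1 by blast
        have s1: "sup (b0 x) (b0 ?u) \<le> sup (b0 x) (b0 y)"
        proof -
          have hh: "sup (b0 x1) (b0 y1) \<le> sup (b0 x) (b0 y)"
            using b0_mono[OF x1(2)] b0_mono[OF y1(2)] by (rule sup_mono)
          have "b0 ?u \<le> sup (b0 x) (b0 y)" using cell hh by (rule order.trans)
          then show ?thesis by simp
        qed
        let ?x' = "sup x y1"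
        have xu2: "sup x ?u = ?x'"
        proof -
          have "sup x ?u = sup (sup x x1) y1" by (simp add: sup_assoc)
          then show ?thesis using x1(2) by (simp add: sup.absorb1)
        qed
        have x'y: "inf ?x' y = y1"
        proof -
          have "inf ?x' y = inf (sup y1 x) y" by (simp add: sup_commute)
          also have "\<dots> = sup y1 (inf x y)" using md[OF y1(2), of x] by simp
          also have "\<dots> = y1" using xy less_imp_le[OF wy1] by (simp add: sup.absorb1)
          finally show ?thesis .
        qed
        have IH2: "b0 (sup ?x' y) \<le> sup (b0 ?x') (b0 y)"
          using 1 x'y wy1 by blast
        have e: "sup ?x' y = sup x y"
        proof -
          have "sup ?x' y = sup x (sup y1 y)" by (simp add: sup_assoc)
          then show ?thesis using y1(2) by (simp add: sup.absorb2)
        qed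
        have "b0 ?x' \<le> sup (b0 x) (b0 y)" using IH1 s1 unfolding xu2 by (rule order.trans)
        then have hh: "sup (b0 ?x') (b0 y) \<le> sup (b0 x) (b0 y)" by simp
        show ?thesis using IH2 hh unfolding e by (rule order.trans)
      qed
    qed
  qed
  then show ?thesis by blast
qed

lemma Z1_mod:
  assumes modu: "modular_lattice TYPE('s)"
  shows "inf (t1 x) (t1 y) \<le> t1 (inf x y)"
proof -
  have md: "\<And>a b c::'s. a \<le> c \<Longrightarrow> sup a (inf b c) = inf (sup a b) c"
    using modu unfolding modular_lattice_def by blast
  have "\<forall>x y. sup x y = v \<longrightarrow> inf (t1 x) (t1 y) \<le> t1 (inf x y)" for v
  proof (induction v rule: wf_induct[OF wfS2])
    case (1 v)
    show ?case
    proof (intro allI impI)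
      fix x y :: 's assume xy: "sup x y = v"
      show "inf (t1 x) (t1 y) \<le> t1 (inf x y)"
      proof (cases "x \<le> y \<or> y \<le> x")
        case True
        then show ?thesis
        proof
          assume "x \<le> y" then show ?thesis by (simp add: inf.absorb1 le_infI1)
        next
          assume "y \<le> x" then show ?thesis by (simp add: inf.absorb2 le_infI2)
        qed
      next
        case False
        have "x \<le> v" "y \<le> v" using xy by auto
        moreover have "x \<noteq> v" "y \<noteq> v" using xy False by (auto simp: le_iff_sup sup_commute)
        ultimately have "x < v" "y < v" by auto
        obtain x1 where x1: "x \<le> x1" "covers x1 v" using \<open>x < v\<close> by (rule cover_below)
        obtain y1 where y1: "y \<le> y1" "covers y1 v" using \<open>y < v\<close> by (rule cover_below)
        have x1v: "x1 < v" and y1v: "y1 < v" using x1 y1 unfolding covers_def by auto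
        have cell: "inf (t1 x1) (t1 y1) \<le> t1 (inf x1 y1)" by (rule cell1[OF x1(2) y1(2)])
        let ?u = "inf x1 y1"
        have sy1x: "sup x y1 = v"
        proof (rule order.antisym)
          show "sup x y1 \<le> v" using \<open>x \<le> v\<close> y1v by simp
          have "sup x y \<le> sup x y1" using y1(1) by (rule sup_mono[OF order.refl])
          then show "v \<le> sup x y1" using xy by simp
        qed
        have xu: "sup x ?u = x1"
        proof -
          have "sup x ?u = inf (sup x y1) x1" using md[OF x1(1), of y1] by (simp add: inf_commute)
          also have "\<dots> = x1" using sy1x x1v by (simp add: inf.absorb2 less_imp_le)
          finally show ?thesis .
        qed
        have IH1: "inf (t1 x) (t1 ?u) \<le> t1 (inf x ?u)"
          using 1 xu x1v by blast
        have s1: "inf (t1 x) (t1 y) \<le> inf (t1 x) (t1 ?u)"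
        proof -
          have "inf (t1 x) (t1 y) \<le> inf (t1 x1) (t1 y1)"
            using t1_mono[OF x1(1)] t1_mono[OF y1(1)] by (rule inf_mono)
          then have "inf (t1 x) (t1 y) \<le> t1 ?u" using cell by (rule order.trans)
          then show ?thesis by simp
        qed
        let ?x' = "inf x y1"
        have xu2: "inf x ?u = ?x'"
        proof -
          have "inf x ?u = inf (inf x x1) y1" by (simp add: inf_assoc)
          then show ?thesis using x1(1) by (simp add: inf.absorb1)
        qed
        have x'y: "sup ?x' y = y1"
        proof -
          have "sup ?x' y = sup y (inf x y1)" by (simp add: sup_commute)
          also have "\<dots> = inf (sup y x) y1" using md[OF y1(1), of x] .
          also have "\<dots> = y1" using xy y1v by (simp add: sup_commute inf.absorb2 less_imp_le)
          finally show ?thesis .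
        qed
        have IH2: "inf (t1 ?x') (t1 y) \<le> t1 (inf ?x' y)"
          using 1 x'y y1v by blast
        have e: "inf ?x' y = inf x y"
        proof -
          have "inf ?x' y = inf x (inf y1 y)" by (simp add: inf_assoc)
          then show ?thesis using y1(1) by (simp add: inf.absorb2)
        qed
        have "inf (t1 x) (t1 y) \<le> inf (t1 ?x') (t1 y)"
        proof -
          have "inf (t1 x) (t1 y) \<le> t1 ?x'" using s1 IH1 unfolding xu2 by (rule order.trans)
          then show ?thesis by simp
        qed
        then show ?thesis using IH2 unfolding e by (rule order.trans)
      qed
    qed
  qed
  then show ?thesis by blast
qed

lemma join_mem:
  assumes Z: "\<And>x y. b0 (sup x y) \<le> sup (b0 x) (b0 y)"
    and a: "a \<in> L x" and b: "b \<in> L y"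
  shows "sup a b \<in> L (sup x y)"
proof -
  let ?z = "sup x y"
  have 1: "sup a (b0 ?z) \<in> L ?z" using proj_up[OF _ a, of ?z] by simp
  have 2: "sup b (b0 ?z) \<in> L ?z" using proj_up[OF _ b, of ?z] by simp
  have "sup (sup a (b0 ?z)) (sup b (b0 ?z)) \<in> L ?z" using sub[OF 1 2] by blast
  moreover have "b0 ?z \<le> sup a b"
    using Z[of x y] b0(2)[OF a] b0(2)[OF b] by (meson order.trans sup.mono)
  moreover have "sup (sup a (b0 ?z)) (sup b (b0 ?z)) = sup (sup a b) (b0 ?z)"
    by (simp add: ac_simps)
  ultimately show ?thesis by (simp add: sup.absorb1)
qed

lemma meet_mem:
  assumes Z: "\<And>x y. inf (t1 x) (t1 y) \<le> t1 (inf x y)"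
    and a: "a \<in> L x" and b: "b \<in> L y"
  shows "inf a b \<in> L (inf x y)"
proof -
  let ?z = "inf x y"
  have 1: "inf a (t1 ?z) \<in> L ?z" using proj_down[OF _ a, of ?z] by simp
  have 2: "inf b (t1 ?z) \<in> L ?z" using proj_down[OF _ b, of ?z] by simp
  have "inf (inf a (t1 ?z)) (inf b (t1 ?z)) \<in> L ?z" using sub[OF 1 2] by blast
  moreover have "inf a b \<le> t1 ?z"
  proof -
    have "inf a b \<le> inf (t1 x) (t1 y)" using t1(2)[OF a] t1(2)[OF b] by (rule inf_mono)
    then show ?thesis using Z[of x y] by (rule order.trans)
  qed
  moreover have "inf (inf a (t1 ?z)) (inf b (t1 ?z)) = inf (inf a b) (t1 ?z)"
    by (simp add: ac_simps)
  ultimately show ?thesis by (simp add: inf.absorb1)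
qed

lemma order_part:
  assumes Z: "\<And>x y. b0 (sup x y) \<le> sup (b0 x) (b0 y)"
    and a: "a \<in> L x" and b: "b \<in> L y" and ab: "a \<le> b"
  shows "(a, b) \<in> R\<^sup>+"
proof -
  let ?z = "sup x y"
  have bz: "b \<in> L ?z" using join_mem[OF Z a b] ab by (simp add: sup.absorb2)
  have p: "sup a (b0 ?z) \<in> L ?z \<and> (a, sup a (b0 ?z)) \<in> R\<^sup>*" using proj_up[OF _ a, of ?z] by simp
  have "sup a (b0 ?z) \<le> b" using ab b0(2)[OF bz] by simp
  then have "(sup a (b0 ?z), b) \<in> R" unfolding R_def using p bz by blast
  then show ?thesis using rtrancl_into_trancl1[OF conjunct2[OF p]] by blast
qed

lemma R_le: "(a, b) \<in> R\<^sup>+ \<Longrightarrow> a \<le> b"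
proof (induction rule: trancl_induct)
  case (base y) then show ?case unfolding R_def by blast
next
  case (step y z)
  from step.hyps(2) have "y \<le> z" unfolding R_def by blast
  with step.IH show ?case by (rule order.trans)
qed

end

theorem corollary5p4:
  fixes L :: "'s::lattice \<Rightarrow> 'a::lattice set"
  assumes S_fin: "finite_length_on (UNIV :: 's set)"
    and L_sub: "\<And>x. sublattice (L x)"
    and L_fin: "\<And>x. finite_length_on (L x)"
    and glued: "glued_system L"
    and alt: "modular_lattice TYPE('s) \<or>
              (\<forall>x y. sup (bot_of (L x)) (bot_of (L y)) = bot_of (L (sup x y)) \<and>
                     inf (top_of (L x)) (top_of (L y)) = top_of (L (inf x y)))"
  shows "sublattice (\<Union>x. L x) \<and>
         (\<forall>a\<in>(\<Union>x. L x). \<forall>b\<in>(\<Union>x. L x). (a, b) \<in> glued_order L \<longleftrightarrow> a \<le> b)"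
proof -
  interpret gs L using assms by (unfold_locales) auto
  have Z0: "bot_of (L (sup x y)) \<le> sup (bot_of (L x)) (bot_of (L y))" for x y
  proof (cases "modular_lattice TYPE('s)")
    case True then show ?thesis by (rule Z0_mod)
  next
    case False
    then have "sup (bot_of (L x)) (bot_of (L y)) = bot_of (L (sup x y))" using alt by blast
    then show ?thesis by simp
  qed
  have Z1: "inf (top_of (L x)) (top_of (L y)) \<le> top_of (L (inf x y))" for x y
  proof (cases "modular_lattice TYPE('s)")
    case True then show ?thesis by (rule Z1_mod)
  next
    case False
    then have "inf (top_of (L x)) (top_of (L y)) = top_of (L (inf x y))" using alt by blast
    then show ?thesis by simp
  qed
  have GR: "glued_order L = R\<^sup>+" unfolding glued_order_def R_def by simp
  have "sublattice (\<Union>x. L x)"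
    unfolding sublattice_def
  proof (intro conjI ballI)
    show "(\<Union>x. L x) \<noteq> {}" using b0(1) by blast
  next
    fix a b assume "a \<in> (\<Union>x. L x)" "b \<in> (\<Union>x. L x)"
    then obtain x y where xy: "a \<in> L x" "b \<in> L y" by blast
    show "sup a b \<in> (\<Union>x. L x)" using join_mem[OF Z0 xy] by blast
    show "inf a b \<in> (\<Union>x. L x)" using meet_mem[OF Z1 xy] by blast
  qed
  moreover have "\<forall>a\<in>(\<Union>x. L x). \<forall>b\<in>(\<Union>x. L x). (a, b) \<in> glued_order L \<longleftrightarrow> a \<le> b"
  proof (intro ballI iffI)
    fix a b assume "(a, b) \<in> glued_order L"
    then show "a \<le> b" using R_le GR by simp
  next
    fix a b assume "a \<in> (\<Union>x. L x)" "b \<in> (\<Union>x. L x)" "a \<le> b"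
    then obtain x y where xy: "a \<in> L x" "b \<in> L y" by blast
    show "(a, b) \<in> glued_order L" using order_part[OF Z0 xy \<open>a \<le> b\<close>] GR by simp
  qed
  ultimately show ?thesis by blast
qed

end
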